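(* For every integer $k\ge1$ and every $n\ge2k+1$, the elements $\Lambda_{\{2,4,\dots,2k\}}$ and $\Lambda_{\{1,2k+1\}}$ commute in $U_q(\mathfrak{sl}_2)^{\otimes n}$.
   Context: Let $\mathbb{K}$ be a field and $q\in\mathbb{K}$ not a root of unity. $U_q(\mathfrak{sl}_2)$ is the associative $\mathbb{K}$-algebra with generators $E,F,K,K^{-1}$ and relations $KK^{-1}=K^{-1}K=1$, $KE=q^2EK$, $KF=q^{-2}FK$, $EF-FE=\frac{K-K^{-1}}{q-q^{-1}}$, with Casimir element $\Lambda=(q-q^{-1})^2EF+q^{-1}K+qK^{-1}$ and coproduct $\Delta(E)=E\otimes1+K\otimes E$, $\Delta(F)=F\otimes K^{-1}+1\otimes F$, $\Delta(K^{\pm1})=K^{\pm1}\otimes K^{\pm1}$. $\mathcal{I}_R$ is the subalgebra generated by $EK^{-1},F,K^{-1},\Lambda$, with algebra morphism $\tau_R:\mathcal{I}_R\to U_q(\mathfrak{sl}_2)\otimes\mathcal{I}_R$: $\tau_R(EK^{-1})=K^{-1}\otimes EK^{-1}$, $\tau_R(F)=K\otimes F-q^{-3}(q-q^{-1})^2F^2K\otimes EK^{-1}+q^{-1}(q+q^{-1})FK\otimes K^{-1}-q^{-1}FK\otimes\Lambda$, $\tau_R(K^{-1})=1\otimes K^{-1}-q^{-1}(q-q^{-1})^2F\otimes EK^{-1}$, $\tau_R(\Lambda)=1\otimes\Lambda$. $1^{\otimes\ell}\otimes\varphi\otimes1^{\otimes m}$ applies $\varphi$ to tensor position $\ell+1$.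 For $A=\{a_1<\dots<a_m\}\subseteq\{1,\dots,n\}$, $\Lambda_A=1^{\otimes(a_1-1)}\otimes(\mu_m\circ\cdots\circ\mu_2)(\Lambda)\otimes1^{\otimes(n-a_m)}$ with $\mu_i=(1^{\otimes(a_i-a_1-1)}\otimes\tau_R)\circ\cdots\circ(1^{\otimes(a_{i-1}-a_1+1)}\otimes\tau_R)\circ(1^{\otimes(a_{i-1}-a_1)}\otimes\Delta)$ (no $\tau_R$ factors when $a_i=a_{i-1}+1$). *)

theory Defs
  imports Main
begin

text \<open>
  An atom  At j l  denotes the element l of U_q(sl_2) placed in tensor
  position j (positions are 1-indexed, as in the paper).  The letters
  LEKi and LLam denote E K^{-1} and the Casimir Lambda; together with LF and
  LKi they are the generators of the subalgebra I_R.
\<close>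

datatype letter = LE | LF | LK | LKi | LEKi | LLam

datatype 'k tm = Sc 'k | At nat letter | Add "'k tm" "'k tm" | Mul "'k tm" "'k tm"

text \<open>Evaluation of a symbolic expression in a K-algebra given by a ring 'a,
  a structure map sc : K -> 'a (ring homomorphism into the centre) and
  elements e j, f j, k j, ki j (the generators E, F, K, K^{-1} in position j).\<close>

fun letter_val :: "'k::field \<Rightarrow> ('k \<Rightarrow> 'a::ring_1) \<Rightarrow> (nat \<Rightarrow> 'a) \<Rightarrow> (nat \<Rightarrow> 'a)
    \<Rightarrow> (nat \<Rightarrow> 'a) \<Rightarrow> (nat \<Rightarrow> 'a) \<Rightarrow> nat \<Rightarrow> letter \<Rightarrow> 'a" where
  "letter_val q sc e f k ki j LE = e j"
| "letter_val q sc e f k ki j LF = f j"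
| "letter_val q sc e f k ki j LK = k j"
| "letter_val q sc e f k ki j LKi = ki j"
| "letter_val q sc e f k ki j LEKi = e j * ki j"
| "letter_val q sc e f k ki j LLam =
     sc ((q - inverse q)^2) * e j * f j + sc (inverse q) * k j + sc q * ki j"

fun ev :: "'k::field \<Rightarrow> ('k \<Rightarrow> 'a::ring_1) \<Rightarrow> (nat \<Rightarrow> 'a) \<Rightarrow> (nat \<Rightarrow> 'a)
    \<Rightarrow> (nat \<Rightarrow> 'a) \<Rightarrow> (nat \<Rightarrow> 'a) \<Rightarrow> 'k tm \<Rightarrow> 'a" where
  "ev q sc e f k ki (Sc c) = sc c"
| "ev q sc e f k ki (At j l) = letter_val q sc e f k ki j l"
| "ev q sc e f k ki (Add s t) = ev q sc e f k ki s + ev q sc e f k ki t"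
| "ev q sc e f k ki (Mul s t) = ev q sc e f k ki s * ev q sc e f k ki t"

fun subst :: "(nat \<Rightarrow> letter \<Rightarrow> 'k tm) \<Rightarrow> 'k tm \<Rightarrow> 'k tm" where
  "subst \<sigma> (Sc c) = Sc c"
| "subst \<sigma> (At j l) = \<sigma> j l"
| "subst \<sigma> (Add s t) = Add (subst \<sigma> s) (subst \<sigma> t)"
| "subst \<sigma> (Mul s t) = Mul (subst \<sigma> s) (subst \<sigma> t)"

definition sub :: "'k::field tm \<Rightarrow> 'k tm \<Rightarrow> 'k tm" where
  "sub s t = Add s (Mul (Sc (-1)) t)"

text \<open>The coproduct Delta applied in tensor position p (result in positions p, p+1).
  On E, F, K, K^{-1} these are the defining formulas; on E K^{-1} and Lambda
  they are Delta(E)Delta(K^{-1}) and Delta(Lambda) rewritten so that the right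
  tensor factor is expressed through the generators of I_R:
   Delta(E K^{-1}) = E K^{-1} (x) K^{-1} + 1 (x) E K^{-1},
   Delta(Lambda) = Lambda (x) K^{-1} - q^{-1} K (x) K^{-1} - q K (x) K^{-1}
                   + (q-q^{-1})^2 E (x) F + (q-q^{-1})^2 K F (x) E K^{-1} + K (x) Lambda.\<close>

fun delta_img :: "'k::field \<Rightarrow> nat \<Rightarrow> letter \<Rightarrow> 'k tm" where
  "delta_img q p LE = Add (At p LE) (Mul (At p LK) (At (p+1) LE))"
| "delta_img q p LF = Add (Mul (At p LF) (At (p+1) LKi)) (At (p+1) LF)"
| "delta_img q p LK = Mul (At p LK) (At (p+1) LK)"
| "delta_img q p LKi = Mul (At p LKi) (At (p+1) LKi)"
| "delta_img q p LEKi = Add (Mul (At p LEKi) (At (p+1) LKi)) (At (p+1) LEKi)"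
| "delta_img q p LLam =
     Add (Mul (At p LLam) (At (p+1) LKi))
    (Add (Mul (Sc (- inverse q)) (Mul (At p LK) (At (p+1) LKi)))
    (Add (Mul (Sc (- q)) (Mul (At p LK) (At (p+1) LKi)))
    (Add (Mul (Sc ((q - inverse q)^2)) (Mul (At p LE) (At (p+1) LF)))
    (Add (Mul (Sc ((q - inverse q)^2)) (Mul (Mul (At p LK) (At p LF)) (At (p+1) LEKi)))
         (Mul (At p LK) (At (p+1) LLam))))))"

definition delta_at :: "'k::field \<Rightarrow> nat \<Rightarrow> 'k tm \<Rightarrow> 'k tm" where
  "delta_at q p = subst (\<lambda>j l. if j = p then delta_img q p l else At j l)"

text \<open>tau_R applied in tensor position j (result in positions j, j+1), defined on the
  generators E K^{-1}, F, K^{-1}, Lambda of I_R exactly as in the paper.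
  (It is only ever applied to a factor lying in I_R, written in these generators;
  the letters LE, LK never occur there and are left unchanged.)\<close>

fun tauR_img :: "'k::field \<Rightarrow> nat \<Rightarrow> letter \<Rightarrow> 'k tm" where
  "tauR_img q j LEKi = Mul (At j LKi) (At (j+1) LEKi)"
| "tauR_img q j LF =
     Add (Mul (At j LK) (At (j+1) LF))
    (Add (Mul (Sc (- (inverse q ^ 3) * (q - inverse q)^2))
              (Mul (Mul (Mul (At j LF) (At j LF)) (At j LK)) (At (j+1) LEKi)))
    (Add (Mul (Sc (inverse q * (q + inverse q))) (Mul (Mul (At j LF) (At j LK)) (At (j+1) LKi)))
         (Mul (Sc (- inverse q)) (Mul (Mul (At j LF) (At j LK)) (At (j+1) LLam)))))"
| "tauR_img q j LKi =
     Add (At (j+1) LKi)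
         (Mul (Sc (- inverse q * (q - inverse q)^2)) (Mul (At j LF) (At (j+1) LEKi)))"
| "tauR_img q j LLam = At (j+1) LLam"
| "tauR_img q j LE = At j LE"
| "tauR_img q j LK = At j LK"

definition tauR_at :: "'k::field \<Rightarrow> nat \<Rightarrow> 'k tm \<Rightarrow> 'k tm" where
  "tauR_at q j = subst (\<lambda>i l. if i = j then tauR_img q j l else At i l)"

text \<open>mu_i in absolute positions: Delta in position a_{i-1}, then tau_R in positions
  a_{i-1}+1, ..., a_i - 1 (in this order).\<close>

definition mu_step :: "'k::field \<Rightarrow> nat \<Rightarrow> nat \<Rightarrow> 'k tm \<Rightarrow> 'k tm" where
  "mu_step q prev a t = fold (tauR_at q) [prev+1..<a] (delta_at q prev t)"

fun lam_steps :: "'k::field \<Rightarrow> nat \<Rightarrow> nat list \<Rightarrow> 'k tm \<Rightarrow> 'k tm" where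
  "lam_steps q prev [] t = t"
| "lam_steps q prev (a # as) t = lam_steps q a as (mu_step q prev a t)"

definition LamA :: "'k::field \<Rightarrow> nat set \<Rightarrow> 'k tm" where
  "LamA q A = (let xs = sorted_list_of_set A
               in lam_steps q (hd xs) (tl xs) (At (hd xs) LLam))"

text \<open>q is not a root of unity (and q is invertible, as q^{-1} is used).\<close>

definition not_root_of_unity :: "'k::field \<Rightarrow> bool" where
  "not_root_of_unity q \<longleftrightarrow> q \<noteq> 0 \<and> (\<forall>m::nat. m \<ge> 1 \<longrightarrow> q ^ m \<noteq> 1)"

text \<open>A K-algebra 'a (ring with central ring homomorphism sc from K) together with
  elements satisfying the defining relations of U_q(sl_2)^{tensor n}: the relations of
  U_q(sl_2) in each position 1..n, and generators in different positions commute.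
  U_q(sl_2)^{tensor n} is the universal such algebra.\<close>

definition Uq_tensor_model :: "'k::field \<Rightarrow> nat \<Rightarrow> ('k \<Rightarrow> 'a::ring_1) \<Rightarrow> (nat \<Rightarrow> 'a)
    \<Rightarrow> (nat \<Rightarrow> 'a) \<Rightarrow> (nat \<Rightarrow> 'a) \<Rightarrow> (nat \<Rightarrow> 'a) \<Rightarrow> bool" where
  "Uq_tensor_model q n sc e f k ki \<longleftrightarrow>
     sc 1 = 1 \<and> (\<forall>x y. sc (x + y) = sc x + sc y) \<and> (\<forall>x y. sc (x * y) = sc x * sc y) \<and>
     (\<forall>x a. sc x * a = a * sc x) \<and>
     (\<forall>i\<in>{1..n}.
        k i * ki i = 1 \<and> ki i * k i = 1 \<and>
        k i * e i = sc (q^2) * e i * k i \<and>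
        k i * f i = sc (inverse q ^ 2) * f i * k i \<and>
        e i * f i - f i * e i = sc (inverse (q - inverse q)) * (k i - ki i)) \<and>
     (\<forall>i\<in>{1..n}. \<forall>j\<in>{1..n}. i \<noteq> j \<longrightarrow>
        (\<forall>x\<in>{e i, f i, k i, ki i}. \<forall>y\<in>{e j, f j, k j, ki j}. x * y = y * x))"

end

theory Submission imports Defs begin

definition IL :: "letter set" where "IL = {LKi, LEKi, LF, LLam}"

definition wq :: "'k::field \<Rightarrow> letter \<Rightarrow> 'k" where
  "wq q y = (case y of LEKi \<Rightarrow> q^2 | LF \<Rightarrow> inverse q ^ 2 | _ \<Rightarrow> 1)"
definition gc :: "'k::field \<Rightarrow> letter \<Rightarrow> letter \<Rightarrow> 'k" where
  "gc q y x = (case y of LKi \<Rightarrow> (case x of LF \<Rightarrow> 1 - inverse q ^ 2 | _ \<Rightarrow> 0)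
     | LEKi \<Rightarrow> (case x of LLam \<Rightarrow> q * inverse (q - inverse q)
                       | LKi \<Rightarrow> - (q^2 + 1) * inverse (q - inverse q) | _ \<Rightarrow> 0)
     | _ \<Rightarrow> 0)"
definition GG :: "('k::field \<Rightarrow> 'a::ring_1) \<Rightarrow> 'k \<Rightarrow> (letter \<Rightarrow> 'a) \<Rightarrow> letter \<Rightarrow> 'a" where
  "GG sc q Z y = (\<Sum>x\<in>IL. sc (gc q y x) * Z x)"
definition LamE :: "('k::field \<Rightarrow> 'a::ring_1) \<Rightarrow> 'k \<Rightarrow> 'a \<Rightarrow> 'a \<Rightarrow> 'a \<Rightarrow> 'a \<Rightarrow> 'a" where
  "LamE sc q E F K Ki = sc ((q - inverse q)^2) * E * F + sc (inverse q) * K + sc q * Ki"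
definition Zb :: "('k::field \<Rightarrow> 'a::ring_1) \<Rightarrow> 'k \<Rightarrow> 'a \<Rightarrow> 'a \<Rightarrow> 'a \<Rightarrow> 'a \<Rightarrow> letter \<Rightarrow> 'a" where
  "Zb sc q E F K Ki x = (case x of LKi \<Rightarrow> Ki | LEKi \<Rightarrow> E * Ki | LF \<Rightarrow> F
      | LLam \<Rightarrow> LamE sc q E F K Ki | LE \<Rightarrow> E | LK \<Rightarrow> K)"
definition cfT :: "('k::field \<Rightarrow> 'a::ring_1) \<Rightarrow> 'k \<Rightarrow> 'a \<Rightarrow> 'a \<Rightarrow> 'a \<Rightarrow> 'a \<Rightarrow> letter \<Rightarrow> letter \<Rightarrow> 'a" where
  "cfT sc q E F K Ki y x = (case y of
      LKi \<Rightarrow> (case x of LKi \<Rightarrow> 1 | LEKi \<Rightarrow> sc (- inverse q * (q - inverse q)^2) * F | _ \<Rightarrow> 0)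
    | LEKi \<Rightarrow> (case x of LEKi \<Rightarrow> Ki | _ \<Rightarrow> 0)
    | LF \<Rightarrow> (case x of LF \<Rightarrow> K
                   | LEKi \<Rightarrow> sc (- (inverse q ^ 3) * (q - inverse q)^2) * (F * (F * K))
                   | LKi \<Rightarrow> sc (inverse q * (q + inverse q)) * (F * K)
                   | LLam \<Rightarrow> sc (- inverse q) * (F * K) | _ \<Rightarrow> 0)
    | LLam \<Rightarrow> (case x of LLam \<Rightarrow> 1 | _ \<Rightarrow> 0)
    | _ \<Rightarrow> 0)"
definition cfD :: "('k::field \<Rightarrow> 'a::ring_1) \<Rightarrow> 'k \<Rightarrow> 'a \<Rightarrow> 'a \<Rightarrow> 'a \<Rightarrow> 'a \<Rightarrow> letter \<Rightarrow> letter \<Rightarrow> 'a" where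
  "cfD sc q E F K Ki y x = (case y of
      LKi \<Rightarrow> (case x of LKi \<Rightarrow> Ki | _ \<Rightarrow> 0)
    | LEKi \<Rightarrow> (case x of LKi \<Rightarrow> E * Ki | LEKi \<Rightarrow> 1 | _ \<Rightarrow> 0)
    | LF \<Rightarrow> (case x of LKi \<Rightarrow> F | LF \<Rightarrow> 1 | _ \<Rightarrow> 0)
    | LLam \<Rightarrow> (case x of LKi \<Rightarrow> LamE sc q E F K Ki + sc (- inverse q) * K + sc (- q) * K
                   | LF \<Rightarrow> sc ((q - inverse q)^2) * E
                   | LEKi \<Rightarrow> sc ((q - inverse q)^2) * (K * F)
                   | LLam \<Rightarrow> K | _ \<Rightarrow> 0)
    | _ \<Rightarrow> 0)"


locale scl =
  fixes sc :: "'k::field \<Rightarrow> 'a::ring_1" and q :: 'k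
  assumes sc1: "sc 1 = 1" and scadd: "\<And>x y. sc (x + y) = sc x + sc y"
    and scmul: "\<And>x y. sc (x * y) = sc x * sc y" and sccomm: "\<And>x a. sc x * a = a * sc x"
    and q0: "q \<noteq> 0" and qq: "q - inverse q \<noteq> 0"
begin

lemma sc0: "sc 0 = 0" using scadd[of 0 0] by simp
lemma scneg: "sc (- x) = - sc x" using scadd[of x "-x"] by (simp add: sc0 add_eq_0_iff)
lemma sc_ml: "sc a * (sc b * x) = sc (a * b) * x" by (simp add: scmul mult.assoc)
lemma sc_mm: "sc a * sc b = sc (a * b)" by (simp add: scmul)
lemma sc_r: "x * sc a = sc a * x" by (rule sccomm[symmetric])
lemma sc_mid: "x * (sc a * y) = sc a * (x * y)"
proof -
  have "x * (sc a * y) = (x * sc a) * y" by (rule mult.assoc[symmetric])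
  also have "\<dots> = (sc a * x) * y" by (simp only: sccomm[of a x])
  finally show ?thesis by (simp only: mult.assoc)
qed
lemma sc_neg: "- x = sc (-1) * x" by (simp add: scneg sc1)
lemma sc_diff: "x - y = x + sc (-1) * y" by (simp add: scneg sc1)
lemma sc_add1: "sc a * x + sc b * x = sc (a + b) * x" by (simp add: scadd distrib_right)
lemma sc_add2: "sc a * x + (sc b * x + y) = sc (a + b) * x + y" by (simp add: scadd distrib_right add.assoc)
lemma sc_add3: "x + sc b * x = sc (1 + b) * x" by (simp add: scadd distrib_right sc1)
lemma sc_add4: "x + (sc b * x + y) = sc (1 + b) * x + y" by (simp add: scadd distrib_right sc1 add.assoc)
lemma sc_add5: "sc a * x + x = sc (a + 1) * x" by (simp add: scadd distrib_right sc1)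
lemma sc_add6: "sc a * x + (x + y) = sc (a + 1) * x + y" by (simp add: scadd distrib_right sc1 add.assoc)
lemma sc_add7: "x + x = sc 2 * x" using sc_add3[of x 1] by (simp add: sc1)
lemma sc_add8: "x + (x + y) = sc 2 * x + y" using sc_add7 by (simp add: add.assoc[symmetric])
lemma sc_cong: "a = b \<Longrightarrow> sc a * x = sc b * x" by simp
lemma sc_cong0: "a = 0 \<Longrightarrow> sc a * x = 0" by (simp add: sc0)
lemma qq1: "q * q \<noteq> 1" using qq q0 by (auto simp: field_simps)
lemma qq2: "q\<^sup>2 \<noteq> 1" using qq1 by (simp add: power2_eq_square)
definition qi where "qi = inverse q"
definition qd where "qd = inverse (q - inverse q)"
lemma qfold: "inverse q = qi" "inverse (q - qi) = qd" "inverse (q^2) = qi^2" "inverse (q^3) = qi^3"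
  "inverse (q^4) = qi^4"
  by (simp_all add: qi_def qd_def power_inverse)
lemma qfacts: "q * qi = 1" "(q - qi) * qd = 1" using q0 qq by (simp_all add: qi_def qd_def)
lemma qinv: "q * inverse q = 1" using q0 by simp
lemma qqinv: "(q - inverse q) * inverse (q - inverse q) = 1" using qq by simp
lemma qq4: "q * q - 1 \<noteq> 0" using qq1 by simp
lemma qq5: "q - inverse q = (q * q - 1) / q" using q0 by (simp add: field_simps)
lemma qq3: "inverse (q - inverse q) = q / (q * q - 1)" using q0 qq1 by (simp add: field_simps)
lemma grp: 
  "sc a * m + (y + sc b * m) = sc (a + b) * m + y"
  "sc a * m + (y + (sc b * m + r)) = sc (a + b) * m + (y + r)"
  "sc a * m + (y1 + (y2 + sc b * m)) = sc (a + b) * m + (y1 + y2)"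
  "sc a * m + (y1 + (y2 + (sc b * m + r))) = sc (a + b) * m + (y1 + (y2 + r))"
  "sc a * m + (y1 + (y2 + (y3 + sc b * m))) = sc (a + b) * m + (y1 + (y2 + y3))"
  "sc a * m + (y1 + (y2 + (y3 + (sc b * m + r)))) = sc (a + b) * m + (y1 + (y2 + (y3 + r)))"
  "sc a + (y + sc b) = sc (a + b) + y"
  "sc a + (y + (sc b + r)) = sc (a + b) + (y + r)"
  "sc a + (y1 + (y2 + sc b)) = sc (a + b) + (y1 + y2)"
  "sc a + (y1 + (y2 + (sc b + r))) = sc (a + b) + (y1 + (y2 + r))"
  "sc a + (y1 + (y2 + (y3 + sc b))) = sc (a + b) + (y1 + (y2 + y3))"
  "sc a + (y1 + (y2 + (y3 + (sc b + r)))) = sc (a + b) + (y1 + (y2 + (y3 + r)))"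
  "sc a + sc b = sc (a + b)" "sc a + (sc b + r) = sc (a + b) + r"
  "1 + sc a = sc (1 + a)" "1 + (sc a + r) = sc (1 + a) + r" "sc a + 1 = sc (a + 1)"
  "1 + (y + sc b) = sc (1 + b) + y" "1 + (y + (sc b + r)) = sc (1 + b) + (y + r)"
  "sc a + (y + 1) = sc (a + 1) + y" "sc a + (y + (1 + r)) = sc (a + 1) + (y + r)"
  by (simp_all add: scadd distrib_right algebra_simps sc1)
lemma to_zero: "x + sc (-1) * y = 0 \<Longrightarrow> x = y" by (simp add: scneg sc1)
lemma zsum: "a = 0 \<Longrightarrow> r = 0 \<Longrightarrow> sc a * m + r = 0" "a = 0 \<Longrightarrow> r = 0 \<Longrightarrow> sc a + r = 0"
  "a = 0 \<Longrightarrow> sc a = 0" "a = 0 \<Longrightarrow> sc a * m = 0" by (simp_all add: sc0)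
lemmas sc_add = grp sc_add1 sc_add2 sc_add3 sc_add4 sc_add5 sc_add6 sc_add7 sc_add8


lemma lift_generic:
  fixes Z N :: "letter \<Rightarrow> 'a" and cf :: "letter \<Rightarrow> letter \<Rightarrow> 'a" and X Y Fp Kp :: 'a
  assumes ZX: "\<And>x. x \<in> IL \<Longrightarrow> Z x * X = sc (wq q x) * (X * Z x)"
    and ZY: "\<And>x. x \<in> IL \<Longrightarrow> Z x * Y - Y * Z x = X * GG sc q Z x"
    and cX: "\<And>y x. cf y x * X = X * cf y x" and cY: "\<And>y x. cf y x * Y = Y * cf y x"
    and FZ: "\<And>x. x \<in> IL \<Longrightarrow> Fp * Z x = Z x * Fp" and KZ: "\<And>x. x \<in> IL \<Longrightarrow> Kp * Z x = Z x * Kp"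
    and FX: "Fp * X = X * Fp" and KX: "Kp * X = X * Kp"
    and N: "\<And>y. y \<in> IL \<Longrightarrow> N y = (\<Sum>x\<in>IL. cf y x * Z x)"
    and condb: "\<forall>y\<in>IL. \<forall>x\<in>IL. sc (wq q x) * (cf y x * Fp) - Fp * cf y x + (\<Sum>x'\<in>IL. cf y x' * sc (gc q x' x))
                  = Kp * (\<Sum>y'\<in>IL. sc (gc q y y') * cf y' x)"
    and conda: "\<forall>y\<in>IL. \<forall>x\<in>IL. sc (wq q x) * (cf y x * Kp) = sc (wq q y) * (Kp * cf y x)"
    and y: "y \<in> IL"
  shows "N y * (Kp * X) = sc (wq q y) * ((Kp * X) * N y)"
    and "N y * (Fp * X + Y) - (Fp * X + Y) * N y = (Kp * X) * GG sc q N y"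
proof -
  have "N y * (Kp * X) = (\<Sum>x\<in>IL. cf y x * Z x * (Kp * X))" by (simp add: N[OF y] sum_distrib_right)
  also have "\<dots> = (\<Sum>x\<in>IL. sc (wq q y) * ((Kp * X) * (cf y x * Z x)))"
  proof (rule sum.cong[OF refl])
    fix x assume x: "x \<in> IL"
    have "cf y x * Z x * (Kp * X) = cf y x * (Z x * Kp) * X" by (simp add: mult.assoc)
    also have "\<dots> = (cf y x * Kp) * (Z x * X)" by (simp add: KZ[OF x, symmetric] mult.assoc)
    also have "\<dots> = (cf y x * Kp) * (sc (wq q x) * (X * Z x))" by (simp add: ZX[OF x])
    also have "\<dots> = (sc (wq q x) * (cf y x * Kp)) * (X * Z x)" by (simp add: sc_mid mult.assoc)
    also have "\<dots> = (sc (wq q y) * (Kp * cf y x)) * (X * Z x)" using conda x y by simp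
    also have "\<dots> = sc (wq q y) * (Kp * (cf y x * X) * Z x)" by (simp add: mult.assoc)
    also have "\<dots> = sc (wq q y) * ((Kp * X) * (cf y x * Z x))" by (simp add: cX mult.assoc)
    finally show "cf y x * Z x * (Kp * X) = sc (wq q y) * ((Kp * X) * (cf y x * Z x))" .
  qed
  also have "\<dots> = sc (wq q y) * ((Kp * X) * N y)" by (simp add: N[OF y] sum_distrib_left)
  finally show "N y * (Kp * X) = sc (wq q y) * ((Kp * X) * N y)" .
next
  define A where "A x = sc (wq q x) * (cf y x * Fp) - Fp * cf y x" for x
  have step: "cf y x * Z x * (Fp * X + Y) - (Fp * X + Y) * (cf y x * Z x)
      = X * (A x * Z x + cf y x * GG sc q Z x)" if x: "x \<in> IL" for x
  proof -
    have t1: "cf y x * Z x * (Fp * X) = X * (sc (wq q x) * (cf y x * Fp) * Z x)"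
    proof -
      have "cf y x * Z x * (Fp * X) = cf y x * (Z x * Fp) * X" by (simp add: mult.assoc)
      also have "\<dots> = cf y x * Fp * (Z x * X)" by (simp add: FZ[OF x, symmetric] mult.assoc)
      also have "\<dots> = cf y x * Fp * (sc (wq q x) * (X * Z x))" by (simp add: ZX[OF x])
      also have "\<dots> = sc (wq q x) * (cf y x * (Fp * X) * Z x)" by (simp add: sc_mid mult.assoc)
      also have "\<dots> = sc (wq q x) * (X * (cf y x * Fp) * Z x)" by (simp add: FX cX mult.assoc[symmetric])
      finally show ?thesis by (simp add: sc_mid mult.assoc)
    qed
    have t2: "cf y x * Z x * Y = Y * (cf y x * Z x) + X * (cf y x * GG sc q Z x)"
    proof -
      have "Z x * Y = Y * Z x + X * GG sc q Z x" using ZY[OF x] by (simp add: algebra_simps)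
      hence "cf y x * Z x * Y = cf y x * (Y * Z x + X * GG sc q Z x)" by (simp add: mult.assoc)
      also have "\<dots> = Y * (cf y x * Z x) + X * (cf y x * GG sc q Z x)"
        by (simp add: distrib_left mult.assoc[symmetric] cX cY)
      finally show ?thesis .
    qed
    have t3: "Fp * X * (cf y x * Z x) = X * (Fp * cf y x * Z x)" by (simp add: FX mult.assoc)
    have "cf y x * Z x * (Fp * X + Y) - (Fp * X + Y) * (cf y x * Z x)
       = cf y x * Z x * (Fp * X) + cf y x * Z x * Y - Fp * X * (cf y x * Z x) - Y * (cf y x * Z x)"
      by (simp add: distrib_left distrib_right)
    also have "\<dots> = X * (sc (wq q x) * (cf y x * Fp) * Z x) + (Y * (cf y x * Z x) + X * (cf y x * GG sc q Z x))
        - X * (Fp * cf y x * Z x) - Y * (cf y x * Z x)" by (simp only: t1 t2 t3)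
    also have "\<dots> = X * (A x * Z x + cf y x * GG sc q Z x)"
      by (simp add: A_def algebra_simps)
    finally show ?thesis .
  qed
  have "N y * (Fp * X + Y) - (Fp * X + Y) * N y
       = (\<Sum>x\<in>IL. cf y x * Z x * (Fp * X + Y) - (Fp * X + Y) * (cf y x * Z x))"
    by (simp add: N[OF y] sum_distrib_right sum_distrib_left sum_subtractf)
  also have "\<dots> = (\<Sum>x\<in>IL. X * (A x * Z x + cf y x * GG sc q Z x))"
    by (rule sum.cong[OF refl]) (rule step)
  also have "\<dots> = X * ((\<Sum>x\<in>IL. A x * Z x) + (\<Sum>x\<in>IL. cf y x * GG sc q Z x))"
    by (simp only: sum.distrib[symmetric] sum_distrib_left)
  also have "(\<Sum>x\<in>IL. cf y x * GG sc q Z x) = (\<Sum>x\<in>IL. (\<Sum>x'\<in>IL. cf y x' * sc (gc q x' x)) * Z x)"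
  proof -
    have "(\<Sum>x\<in>IL. cf y x * GG sc q Z x) = (\<Sum>x\<in>IL. \<Sum>x'\<in>IL. cf y x * sc (gc q x x') * Z x')"
      by (simp add: GG_def sum_distrib_left mult.assoc)
    also have "\<dots> = (\<Sum>x'\<in>IL. \<Sum>x\<in>IL. cf y x * sc (gc q x x') * Z x')" by (rule sum.swap)
    also have "\<dots> = (\<Sum>x'\<in>IL. (\<Sum>x\<in>IL. cf y x * sc (gc q x x')) * Z x')"
      by (simp add: sum_distrib_right)
    finally show ?thesis .
  qed
  also have "(\<Sum>x\<in>IL. A x * Z x) + (\<Sum>x\<in>IL. (\<Sum>x'\<in>IL. cf y x' * sc (gc q x' x)) * Z x)
      = (\<Sum>x\<in>IL. (Kp * (\<Sum>y'\<in>IL. sc (gc q y y') * cf y' x)) * Z x)"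
  proof -
    have "(\<Sum>x\<in>IL. A x * Z x) + (\<Sum>x\<in>IL. (\<Sum>x'\<in>IL. cf y x' * sc (gc q x' x)) * Z x)
      = (\<Sum>x\<in>IL. (A x + (\<Sum>x'\<in>IL. cf y x' * sc (gc q x' x))) * Z x)"
      by (simp only: sum.distrib[symmetric] distrib_right)
    also have "\<dots> = (\<Sum>x\<in>IL. (Kp * (\<Sum>y'\<in>IL. sc (gc q y y') * cf y' x)) * Z x)"
    proof (rule sum.cong[OF refl])
      fix x assume "x \<in> IL"
      then show "(A x + (\<Sum>x'\<in>IL. cf y x' * sc (gc q x' x))) * Z x = (Kp * (\<Sum>y'\<in>IL. sc (gc q y y') * cf y' x)) * Z x"
        using condb y unfolding A_def by simp
    qed
    finally show ?thesis .
  qed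
  also have "\<dots> = Kp * (\<Sum>y'\<in>IL. sc (gc q y y') * N y')"
  proof -
    have "(\<Sum>x\<in>IL. (Kp * (\<Sum>y'\<in>IL. sc (gc q y y') * cf y' x)) * Z x)
        = Kp * (\<Sum>x\<in>IL. \<Sum>y'\<in>IL. sc (gc q y y') * (cf y' x * Z x))"
      by (simp add: sum_distrib_left sum_distrib_right mult.assoc)
    also have "\<dots> = Kp * (\<Sum>y'\<in>IL. \<Sum>x\<in>IL. sc (gc q y y') * (cf y' x * Z x))"
      by (rule arg_cong[where f="(*) Kp"], rule sum.swap)
    also have "\<dots> = Kp * (\<Sum>y'\<in>IL. sc (gc q y y') * N y')"
      by (rule arg_cong[where f="(*) Kp"], rule sum.cong[OF refl]) (simp add: N sum_distrib_left)
    finally show ?thesis .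
  qed
  finally show "N y * (Fp * X + Y) - (Fp * X + Y) * N y = (Kp * X) * GG sc q N y"
    by (simp add: GG_def KX mult.assoc[symmetric])
qed
end

locale palg = scl sc q for sc :: "'k::field \<Rightarrow> 'a::ring_1" and q :: 'k +
  fixes E F K Ki :: 'a
  assumes KKi: "K * Ki = 1" and KiK: "Ki * K = 1"
    and KE: "K * E = sc (q^2) * E * K"
    and KF: "K * F = sc (inverse q ^ 2) * F * K"
    and EF: "E * F - F * E = sc (inverse (q - inverse q)) * (K - Ki)"
begin

lemma sc_midg0: "E * (sc a * y) = sc a * (E * y)" "F * (sc a * y) = sc a * (F * y)"
  "K * (sc a * y) = sc a * (K * y)" "Ki * (sc a * y) = sc a * (Ki * y)"
  "E * sc a = sc a * E" "F * sc a = sc a * F" "K * sc a = sc a * K" "Ki * sc a = sc a * Ki"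
  by (simp_all add: sc_mid sc_r)
lemmas sc_midg = sc_midg0 sc_mm sc_ml

lemma KF': "K * F = sc (inverse q ^ 2) * (F * K)" using KF by (simp add: mult.assoc)
lemma KE': "K * E = sc (q ^ 2) * (E * K)" using KE by (simp add: mult.assoc)
lemma KiF: "Ki * F = sc (q ^ 2) * (F * Ki)"
proof -
  have "Ki * (K * F) * Ki = Ki * (sc (inverse q ^ 2) * (F * K)) * Ki" by (simp add: KF')
  hence "F * Ki = sc (inverse q ^ 2) * (Ki * F)"
    by (simp add: mult.assoc[symmetric] KiK sc_midg) (simp add: mult.assoc KKi)
  hence "sc (q^2) * (F * Ki) = sc (q^2 * inverse q ^ 2) * (Ki * F)" by (simp add: sc_ml)
  thus ?thesis using q0 by (simp add: power_mult_distrib[symmetric] sc1)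
qed
lemma KiE: "Ki * E = sc (inverse q ^ 2) * (E * Ki)"
proof -
  have "Ki * (K * E) * Ki = Ki * (sc (q ^ 2) * (E * K)) * Ki" by (simp add: KE')
  hence "E * Ki = sc (q ^ 2) * (Ki * E)"
    by (simp add: mult.assoc[symmetric] KiK sc_midg) (simp add: mult.assoc KKi)
  hence "sc (inverse q^2) * (E * Ki) = sc (inverse q^2 * q ^ 2) * (Ki * E)" by (simp add: sc_ml)
  thus ?thesis using q0 by (simp add: power_mult_distrib[symmetric] sc1)
qed

lemma nrm1: "K * (F * x) = sc (inverse q ^ 2) * (F * (K * x))"
  "Ki * (F * x) = sc (q ^ 2) * (F * (Ki * x))"
  "K * (Ki * x) = x" "Ki * (K * x) = x"
  by (simp_all add: mult.assoc[symmetric] KF' KiF KKi KiK sc_mid)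

lemmas nrm = add.assoc KF' KiF nrm1 KKi KiK sc_midg sc_add
  mult.assoc distrib_left distrib_right sc_diff sc_neg

lemma condT_a: "\<forall>y\<in>IL. \<forall>x\<in>IL. sc (wq q x) * (cfT sc q E F K Ki y x * Ki) = sc (wq q y) * (Ki * cfT sc q E F K Ki y x)"
  apply (simp add: IL_def cfT_def wq_def nrm sc1 sc0)
  apply (intro conjI; rule sc_cong; simp add: field_simps q0)
  done

lemma condT_b: "\<forall>y\<in>IL. \<forall>x\<in>IL. sc (wq q x) * (cfT sc q E F K Ki y x * F) - F * cfT sc q E F K Ki y x + (\<Sum>x'\<in>IL. cfT sc q E F K Ki y x' * sc (gc q x' x))
     = Ki * (\<Sum>y'\<in>IL. sc (gc q y y') * cfT sc q E F K Ki y' x)"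
  apply (simp add: IL_def cfT_def wq_def gc_def nrm sc1 sc0)
  apply (intro conjI; (rule sc_cong | rule sc_cong0); (simp only: qfold)?; insert qfacts; ((simp add: algebra_simps power2_eq_square; fail) | algebra))
  done


lemma FE: "F * E = E * F + sc (- inverse (q - inverse q)) * K + sc (inverse (q - inverse q)) * Ki"
  using EF by (simp add: algebra_simps scneg)

lemma nrmE: "F * (E * x) = E * (F * x) + sc (- inverse (q - inverse q)) * (K * x) + sc (inverse (q - inverse q)) * (Ki * x)"
  "K * (E * x) = sc (q ^ 2) * (E * (K * x))"
  "Ki * (E * x) = sc (inverse q ^ 2) * (E * (Ki * x))"
  by (simp_all add: mult.assoc[symmetric] FE KE' KiE sc_mid distrib_right)

lemmas nrmA = nrm FE nrmE KE' KiE

lemma condD_a: "\<forall>y\<in>IL. \<forall>x\<in>IL. sc (wq q x) * (cfD sc q E F K Ki y x * Ki) = sc (wq q y) * (Ki * cfD sc q E F K Ki y x)"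
  apply (simp add: IL_def cfD_def wq_def LamE_def)
  apply (intro conjI; rule to_zero; (simp add: nrmA sc1 sc0)?; (intro zsum)?; ((simp only: qfold)?, insert qfacts, ((simp add: algebra_simps power2_eq_square; fail) | algebra))?)
  done

lemma condD_b: "\<forall>y\<in>IL. \<forall>x\<in>IL. sc (wq q x) * (cfD sc q E F K Ki y x * F) - F * cfD sc q E F K Ki y x + (\<Sum>x'\<in>IL. cfD sc q E F K Ki y x' * sc (gc q x' x))
     = Ki * (\<Sum>y'\<in>IL. sc (gc q y y') * cfD sc q E F K Ki y' x)"
  apply (simp add: IL_def cfD_def wq_def gc_def LamE_def)
  apply (intro conjI; rule to_zero; (simp add: nrmA sc1 sc0)?; (intro zsum)?; ((simp only: qfold)?, insert qfacts, ((simp add: algebra_simps power2_eq_square; fail) | algebra))?)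
  done

lemma base_a: "\<forall>y\<in>IL. Zb sc q E F K Ki y * Ki = sc (wq q y) * (Ki * Zb sc q E F K Ki y)"
  apply (simp add: IL_def Zb_def wq_def LamE_def)
  apply (intro conjI; rule to_zero; (simp add: nrmA sc1 sc0)?; (intro zsum)?; ((simp only: qfold)?, insert qfacts, ((simp add: algebra_simps power2_eq_square; fail) | algebra))?)
  done
lemma base_b: "\<forall>y\<in>IL. Zb sc q E F K Ki y * F - F * Zb sc q E F K Ki y = Ki * GG sc q (Zb sc q E F K Ki) y"
  apply (simp add: IL_def Zb_def GG_def gc_def LamE_def)
  apply (intro conjI; rule to_zero; (simp add: nrmA sc1 sc0)?; (intro zsum)?; ((simp only: qfold)?, insert qfacts, ((simp add: algebra_simps power2_eq_square; fail) | algebra))?)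
  done
end

fun evL :: "('k \<Rightarrow> 'a::ring_1) \<Rightarrow> (nat \<Rightarrow> letter \<Rightarrow> 'a) \<Rightarrow> 'k tm \<Rightarrow> 'a" where
  "evL sc L (Sc c) = sc c"
| "evL sc L (At j l) = L j l"
| "evL sc L (Add s t) = evL sc L s + evL sc L t"
| "evL sc L (Mul s t) = evL sc L s * evL sc L t"

lemma ev_evL: "ev q sc e f k ki t = evL sc (letter_val q sc e f k ki) t"
  by (induct t) simp_all
lemma evL_subst: "evL sc L (subst \<sigma> t) = evL sc (\<lambda>j l. evL sc L (\<sigma> j l)) t"
  by (induct t) simp_all

definition Ttau :: "'k::field \<Rightarrow> ('k \<Rightarrow> 'a::ring_1) \<Rightarrow> nat \<Rightarrow> (nat \<Rightarrow> letter \<Rightarrow> 'a) \<Rightarrow> nat \<Rightarrow> letter \<Rightarrow> 'a" where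
  "Ttau q sc p L = (\<lambda>j l. if j = p then evL sc L (tauR_img q p l) else L j l)"
definition Tdel :: "'k::field \<Rightarrow> ('k \<Rightarrow> 'a::ring_1) \<Rightarrow> nat \<Rightarrow> (nat \<Rightarrow> letter \<Rightarrow> 'a) \<Rightarrow> nat \<Rightarrow> letter \<Rightarrow> 'a" where
  "Tdel q sc p L = (\<lambda>j l. if j = p then evL sc L (delta_img q p l) else L j l)"

lemma evL_tau: "evL sc L (tauR_at q p t) = evL sc (Ttau q sc p L) t"
proof -
  have "(\<lambda>j l. evL sc L (if j = p then tauR_img q p l else At j l)) = Ttau q sc p L"
    by (auto simp: Ttau_def fun_eq_iff)
  then show ?thesis by (simp add: tauR_at_def evL_subst)
qed
lemma evL_del: "evL sc L (delta_at q p t) = evL sc (Tdel q sc p L) t"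
proof -
  have "(\<lambda>j l. evL sc L (if j = p then delta_img q p l else At j l)) = Tdel q sc p L"
    by (auto simp: Tdel_def fun_eq_iff)
  then show ?thesis by (simp add: delta_at_def evL_subst)
qed

fun Ftau :: "'k::field \<Rightarrow> ('k \<Rightarrow> 'a::ring_1) \<Rightarrow> nat \<Rightarrow> nat \<Rightarrow> (nat \<Rightarrow> letter \<Rightarrow> 'a) \<Rightarrow> nat \<Rightarrow> letter \<Rightarrow> 'a" where
  "Ftau q sc a 0 L = L"
| "Ftau q sc a (Suc m) L = Ttau q sc a (Ftau q sc (Suc a) m L)"

lemma evL_fold: "evL sc L (fold (tauR_at q) [a..<a+m] t) = evL sc (Ftau q sc a m L) t"
proof (induct m arbitrary: a t)
  case 0 show ?case by simp
next
  case (Suc m)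
  have eq: "[a..<a + Suc m] = a # [Suc a..<Suc a + m]" by (simp del: upt_Suc add: upt_conv_Cons)
  have "evL sc L (fold (tauR_at q) [a..<a + Suc m] t) = evL sc L (fold (tauR_at q) [Suc a..<Suc a + m] (tauR_at q a t))"
    by (simp only: eq fold_Cons comp_def)
  also have "\<dots> = evL sc (Ftau q sc (Suc a) m L) (tauR_at q a t)" by (rule Suc)
  also have "\<dots> = evL sc (Ftau q sc a (Suc m) L) t" by (simp only: evL_tau Ftau.simps)
  finally show ?case .
qed

fun Wint :: "'k::field \<Rightarrow> ('k \<Rightarrow> 'a::ring_1) \<Rightarrow> (nat \<Rightarrow> letter \<Rightarrow> 'a) \<Rightarrow> nat \<Rightarrow> nat \<Rightarrow> nat \<Rightarrow> letter \<Rightarrow> 'a" where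
  "Wint q sc L0 p 0 = L0"
| "Wint q sc L0 p (Suc m) = Tdel q sc p (Ttau q sc (Suc p) (Wint q sc L0 (Suc (Suc p)) m))"

lemma evL_lam: "evL sc L0 (lam_steps q p (map (\<lambda>j. p + 2*j) [1..<Suc m]) t) = evL sc (Wint q sc L0 p m) t"
proof (induct m arbitrary: p t)
  case 0 show ?case by simp
next
  case (Suc m)
  have u: "[Suc 0..<Suc (Suc m)] = Suc 0 # map Suc [Suc 0..<Suc m]" by (simp del: upt_Suc add: upt_conv_Cons map_Suc_upt)
  have l: "map (\<lambda>j. p + 2*j) [1..<Suc (Suc m)] = Suc (Suc p) # map (\<lambda>j. Suc (Suc p) + 2*j) [1..<Suc m]"
    by (simp del: upt_Suc add: u)
  have mu: "mu_step q p (Suc (Suc p)) t = tauR_at q (Suc p) (delta_at q p t)" by (simp add: mu_step_def)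
  show ?case by (simp only: l lam_steps.simps mu Suc evL_tau evL_del Wint.simps)
qed

lemma Ttau_other: "j \<noteq> p \<Longrightarrow> Ttau q sc p L j = L j" by (simp add: Ttau_def fun_eq_iff)
lemma Tdel_other: "j \<noteq> p \<Longrightarrow> Tdel q sc p L j = L j" by (simp add: Tdel_def fun_eq_iff)
lemma Wint_low: "j < p \<Longrightarrow> Wint q sc L0 p m j = L0 j"
  by (induct m arbitrary: p) (simp_all add: Ttau_other Tdel_other)
lemma Ftau_low: "j < a \<Longrightarrow> Ftau q sc a m L j = L j"
  by (induct m arbitrary: a) (simp_all add: Ttau_other)

locale uq = scl sc q for sc :: "'k::field \<Rightarrow> 'a::ring_1" and q :: 'k +
  fixes e f k ki :: "nat \<Rightarrow> 'a" and n :: nat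
  assumes model: "Uq_tensor_model q n sc e f k ki"
begin

abbreviation L0 where "L0 \<equiv> letter_val q sc e f k ki"

lemmas model' = model[unfolded Uq_tensor_model_def]
lemmas modelA = model'[THEN conjunct2, THEN conjunct2, THEN conjunct2, THEN conjunct2, THEN conjunct1]
lemmas modelB = model'[THEN conjunct2, THEN conjunct2, THEN conjunct2, THEN conjunct2, THEN conjunct2]
lemma model_pos: "i \<in> {1..n} \<Longrightarrow> k i * ki i = 1 \<and> ki i * k i = 1 \<and>
        k i * e i = sc (q^2) * e i * k i \<and>
        k i * f i = sc (inverse q ^ 2) * f i * k i \<and>
        e i * f i - f i * e i = sc (inverse (q - inverse q)) * (k i - ki i)"
  by (rule bspec[OF modelA])
lemma model_comm: "i \<in> {1..n} \<Longrightarrow> j \<in> {1..n} \<Longrightarrow> i \<noteq> j \<Longrightarrow> x \<in> {e i, f i, k i, ki i}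
   \<Longrightarrow> y \<in> {e j, f j, k j, ki j} \<Longrightarrow> x * y = y * x"
  by (rule modelB[rule_format])
lemma scl_inst: "scl sc q" by (rule scl.intro, rule sc1, rule scadd, rule scmul, rule sccomm, rule q0, rule qq)

lemma palgI: assumes "1 \<le> i" "i \<le> n" shows "palg sc q (e i) (f i) (k i) (ki i)"
proof -
  have "i \<in> {1..n}" using assms by simp
  from model_pos[OF this] show ?thesis
    by (intro palg.intro scl_inst palg_axioms.intro) simp_all
qed

lemma L0_Zb: "L0 p = Zb sc q (e p) (f p) (k p) (ki p)"
  by (simp add: fun_eq_iff Zb_def LamE_def split: letter.split)

definition cw :: "nat \<Rightarrow> 'a \<Rightarrow> bool" where
  "cw j z \<longleftrightarrow> e j * z = z * e j \<and> f j * z = z * f j \<and> k j * z = z * k j \<and> ki j * z = z * ki j"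

lemma comm_aux: fixes x a b :: 'a assumes "x * a = a * x" "x * b = b * x" shows "x * (a * b) = (a * b) * x"
proof -
  have "x * (a * b) = (x * a) * b" by (simp add: mult.assoc)
  also have "\<dots> = a * (x * b)" by (simp add: assms(1) mult.assoc)
  also have "\<dots> = (a * b) * x" by (simp add: assms(2) mult.assoc)
  finally show ?thesis .
qed
lemma cw_mult: "cw j a \<Longrightarrow> cw j b \<Longrightarrow> cw j (a * b)"
  unfolding cw_def by (simp add: comm_aux)
lemma cw_add: "cw j a \<Longrightarrow> cw j b \<Longrightarrow> cw j (a + b)"
  unfolding cw_def by (simp add: distrib_left distrib_right)
lemma cw_uminus: "cw j a \<Longrightarrow> cw j (- a)"
  unfolding cw_def by simp
lemma cw_diff: "cw j a \<Longrightarrow> cw j b \<Longrightarrow> cw j (a - b)"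
  unfolding cw_def by (simp add: left_diff_distrib right_diff_distrib)
lemma cw_sc: "cw j (sc c)" unfolding cw_def by (simp add: sccomm)
lemma cw_1: "cw j 1" unfolding cw_def by simp
lemma cw_0: "cw j 0" unfolding cw_def by simp
lemma cw_sum: "(\<And>x. x \<in> A \<Longrightarrow> cw j (g x)) \<Longrightarrow> cw j (\<Sum>x\<in>A. g x)"
  by (induct A rule: infinite_finite_induct) (simp_all add: cw_0 cw_add)
lemmas cw_cl = cw_mult cw_add cw_uminus cw_diff cw_sc cw_1 cw_0

lemma cw_gen: assumes "1 \<le> i" "i \<le> n" "1 \<le> j" "j \<le> n" "i \<noteq> j"
  shows "cw j (e i)" "cw j (f i)" "cw j (k i)" "cw j (ki i)"
proof -
  have i: "i \<in> {1..n}" and j: "j \<in> {1..n}" and ji: "j \<noteq> i" using assms by auto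
  note c = model_comm[OF j i ji]
  show "cw j (e i)" "cw j (f i)" "cw j (k i)" "cw j (ki i)" unfolding cw_def by (intro conjI c; simp)+
qed

lemma cw_L0: "1 \<le> i \<Longrightarrow> i \<le> n \<Longrightarrow> 1 \<le> j \<Longrightarrow> j \<le> n \<Longrightarrow> i \<noteq> j \<Longrightarrow> cw j (L0 i l)"
  by (cases l) (simp_all add: cw_gen cw_cl)

definition cmm :: "'a \<Rightarrow> 'a \<Rightarrow> bool" where "cmm z x \<longleftrightarrow> z * x = x * z"
lemma cmm_mult: "cmm z a \<Longrightarrow> cmm z b \<Longrightarrow> cmm z (a * b)"
  unfolding cmm_def by (simp add: comm_aux)
lemma cmm_add: "cmm z a \<Longrightarrow> cmm z b \<Longrightarrow> cmm z (a + b)"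
  unfolding cmm_def by (simp add: distrib_left distrib_right)
lemma cmm_uminus: "cmm z a \<Longrightarrow> cmm z (- a)" unfolding cmm_def by simp
lemma cmm_diff: "cmm z a \<Longrightarrow> cmm z b \<Longrightarrow> cmm z (a - b)"
  unfolding cmm_def by (simp add: left_diff_distrib right_diff_distrib)
lemma cmm_sc: "cmm z (sc c)" unfolding cmm_def by (simp add: sccomm)
lemma cmm_1: "cmm z 1" unfolding cmm_def by simp
lemma cmm_0: "cmm z 0" unfolding cmm_def by simp
lemma cmm_sum: "(\<And>x. x \<in> A \<Longrightarrow> cmm z (g x)) \<Longrightarrow> cmm z (\<Sum>x\<in>A. g x)"
  by (induct A rule: infinite_finite_induct) (simp_all add: cmm_0 cmm_add)
lemmas cmm_cl = cmm_mult cmm_add cmm_uminus cmm_diff cmm_sc cmm_1 cmm_0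
lemma cw_cmm: "cw i z \<Longrightarrow> cmm z (e i) \<and> cmm z (f i) \<and> cmm z (k i) \<and> cmm z (ki i)"
  unfolding cw_def cmm_def by simp
lemma cmm_L0: "cw i z \<Longrightarrow> cmm z (L0 i l)"
  using cw_cmm[of i z] by (cases l) (simp_all add: cmm_cl)

lemma cw_cfT: "1 \<le> p \<Longrightarrow> p \<le> n \<Longrightarrow> 1 \<le> j \<Longrightarrow> j \<le> n \<Longrightarrow> j \<noteq> p \<Longrightarrow> cw j (cfT sc q (e p) (f p) (k p) (ki p) y x)"
  by (cases y; cases x) (simp_all add: cfT_def cw_gen cw_cl)
lemma cw_cfD: "1 \<le> p \<Longrightarrow> p \<le> n \<Longrightarrow> 1 \<le> j \<Longrightarrow> j \<le> n \<Longrightarrow> j \<noteq> p \<Longrightarrow> cw j (cfD sc q (e p) (f p) (k p) (ki p) y x)"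
  by (cases y; cases x) (simp_all add: cfD_def LamE_def cw_gen cw_cl)
lemma cmm_cfT: "cw p z \<Longrightarrow> cmm z (cfT sc q (e p) (f p) (k p) (ki p) y x)"
  using cw_cmm[of p z] by (cases y; cases x) (simp_all add: cfT_def cmm_cl)
lemma cmm_cfD: "cw p z \<Longrightarrow> cmm z (cfD sc q (e p) (f p) (k p) (ki p) y x)"
  using cw_cmm[of p z] by (cases y; cases x) (simp_all add: cfD_def LamE_def cmm_cl)

fun dKi :: "nat \<Rightarrow> nat \<Rightarrow> 'a" where
  "dKi P 0 = 1" | "dKi P (Suc m) = ki P * dKi (Suc P) m"
fun dF :: "nat \<Rightarrow> nat \<Rightarrow> 'a" where
  "dF P 0 = 0" | "dF P (Suc m) = f P * dKi (Suc P) m + dF (Suc P) m"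
fun dK :: "nat \<Rightarrow> nat \<Rightarrow> 'a" where
  "dK P 0 = 1" | "dK P (Suc m) = k P * dK (Suc P) m"

lemma d_cmm: "(\<And>j. P \<le> j \<Longrightarrow> j < P + m \<Longrightarrow> cw j z) \<Longrightarrow> cmm z (dKi P m) \<and> cmm z (dF P m) \<and> cmm z (dK P m)"
proof (induct m arbitrary: P)
  case 0 then show ?case by (simp add: cmm_cl)
next
  case (Suc m)
  have h: "cw P z" using Suc.prems by simp
  have IH: "cmm z (dKi (Suc P) m) \<and> cmm z (dF (Suc P) m) \<and> cmm z (dK (Suc P) m)"
    using Suc.prems by (intro Suc.hyps) auto
  show ?case using IH cw_cmm[OF h] by (simp add: cmm_cl)
qed

lemma d_cw: "1 \<le> P \<Longrightarrow> P + m \<le> Suc n \<Longrightarrow> 1 \<le> j \<Longrightarrow> j \<le> n \<Longrightarrow> (j < P \<or> P + m \<le> j)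
   \<Longrightarrow> cw j (dKi P m) \<and> cw j (dF P m) \<and> cw j (dK P m)"
proof (induct m arbitrary: P)
  case 0 then show ?case by (simp add: cw_cl)
next
  case (Suc m)
  have IH: "cw j (dKi (Suc P) m) \<and> cw j (dF (Suc P) m) \<and> cw j (dK (Suc P) m)"
    using Suc.prems by (intro Suc.hyps) auto
  have "j \<noteq> P" using Suc.prems by auto
  then have "cw j (ki P) \<and> cw j (f P) \<and> cw j (k P)" using Suc.prems cw_gen[of P j] by auto
  then show ?case using IH by (simp add: cw_cl)
qed

definition Inv :: "(nat \<Rightarrow> letter \<Rightarrow> 'a) \<Rightarrow> nat \<Rightarrow> nat \<Rightarrow> bool" where
  "Inv L P m \<longleftrightarrow> (\<forall>y\<in>IL. L P y * dKi P m = sc (wq q y) * (dKi P m * L P y))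
     \<and> (\<forall>y\<in>IL. L P y * dF P m - dF P m * L P y = dKi P m * GG sc q (L P) y)
     \<and> (\<forall>y\<in>IL. \<forall>j. 1 \<le> j \<and> j \<le> n \<and> (j < P \<or> P + m \<le> j) \<longrightarrow> cw j (L P y))"

lemma Inv_base: assumes "1 \<le> P" "P \<le> n" shows "Inv L0 P 1"
proof -
  interpret P: palg sc q "e P" "f P" "k P" "ki P" using palgI assms by auto
  show ?thesis unfolding Inv_def
    using P.base_a P.base_b by (auto simp: L0_Zb intro!: cw_L0[unfolded L0_Zb] assms)
qed

lemma tau_dec: assumes "L p = L0 p" "y \<in> IL"
  shows "evL sc L (tauR_img q p y) = (\<Sum>x\<in>IL. cfT sc q (e p) (f p) (k p) (ki p) y x * L (Suc p) x)"
  using assms(2) unfolding IL_def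
  by (auto simp: assms(1) cfT_def algebra_simps)

lemma del_dec: assumes "L p = L0 p" "y \<in> IL"
  shows "evL sc L (delta_img q p y) = (\<Sum>x\<in>IL. cfD sc q (e p) (f p) (k p) (ki p) y x * L (Suc p) x)"
  using assms(2) unfolding IL_def
  by (auto simp: assms(1) cfD_def LamE_def algebra_simps)


lemma gen_lift:
  fixes cf :: "letter \<Rightarrow> letter \<Rightarrow> 'a" and L L' :: "nat \<Rightarrow> letter \<Rightarrow> 'a"
  assumes inv: "Inv L (Suc p) m" and p1: "1 \<le> p" and pm: "p + m \<le> n"
    and cwcf: "\<And>j y x. 1 \<le> j \<Longrightarrow> j \<le> n \<Longrightarrow> j \<noteq> p \<Longrightarrow> cw j (cf y x)"
    and N: "\<And>y. y \<in> IL \<Longrightarrow> L' p y = (\<Sum>x\<in>IL. cf y x * L (Suc p) x)"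
    and condb: "\<forall>y\<in>IL. \<forall>x\<in>IL. sc (wq q x) * (cf y x * f p) - f p * cf y x + (\<Sum>x'\<in>IL. cf y x' * sc (gc q x' x))
                  = ki p * (\<Sum>y'\<in>IL. sc (gc q y y') * cf y' x)"
    and conda: "\<forall>y\<in>IL. \<forall>x\<in>IL. sc (wq q x) * (cf y x * ki p) = sc (wq q y) * (ki p * cf y x)"
  shows "Inv L' p (Suc m)"
proof -
  let ?Z = "L (Suc p)" let ?X = "dKi (Suc p) m" let ?Y = "dF (Suc p) m"
  from inv have ZX: "\<And>x. x \<in> IL \<Longrightarrow> ?Z x * ?X = sc (wq q x) * (?X * ?Z x)"
    and ZY: "\<And>x. x \<in> IL \<Longrightarrow> ?Z x * ?Y - ?Y * ?Z x = ?X * GG sc q ?Z x"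
    and Zl: "\<And>x j. x \<in> IL \<Longrightarrow> 1 \<le> j \<Longrightarrow> j \<le> n \<Longrightarrow> j < Suc p \<or> Suc p + m \<le> j \<Longrightarrow> cw j (?Z x)"
    unfolding Inv_def by auto
  have cwZp: "\<And>x. x \<in> IL \<Longrightarrow> cw p (?Z x)" using Zl p1 pm by auto
  have cfcw: "\<And>j y x. Suc p \<le> j \<Longrightarrow> j < Suc p + m \<Longrightarrow> cw j (cf y x)"
    using cwcf p1 pm by auto
  have cXY: "cmm (cf y x) ?X \<and> cmm (cf y x) ?Y" for y x
    using d_cmm[of "Suc p" m "cf y x"] cfcw by auto
  have gcw: "cw j (f p) \<and> cw j (ki p)" if "Suc p \<le> j" "j < Suc p + m" for j
    using cw_gen[of p j] that p1 pm by auto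
  have fX: "cmm (f p) ?X" and kX: "cmm (ki p) ?X"
    using d_cmm[of "Suc p" m "f p"] d_cmm[of "Suc p" m "ki p"] gcw by auto
  have cX: "\<And>y x. cf y x * ?X = ?X * cf y x" and cY: "\<And>y x. cf y x * ?Y = ?Y * cf y x"
    using cXY unfolding cmm_def by auto
  have FZ: "\<And>x. x \<in> IL \<Longrightarrow> f p * ?Z x = ?Z x * f p" and KZ: "\<And>x. x \<in> IL \<Longrightarrow> ki p * ?Z x = ?Z x * ki p"
    using cwZp unfolding cw_def by auto
  have FX: "f p * ?X = ?X * f p" and KX: "ki p * ?X = ?X * ki p"
    using fX kX unfolding cmm_def by auto
  note G = lift_generic[where Z="L (Suc p)" and X="dKi (Suc p) m" and Y="dF (Suc p) m" and cf=cf
      and Fp="f p" and Kp="ki p" and N="L' p", OF ZX ZY cX cY FZ KZ FX KX N condb conda]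
  show ?thesis unfolding Inv_def
  proof (intro conjI ballI allI impI)
    fix y assume y: "y \<in> IL"
    have "L' p y * (ki p * ?X) = sc (wq q y) * ((ki p * ?X) * L' p y)"
      by (rule G(1)) (use y in auto)
    then show "L' p y * dKi p (Suc m) = sc (wq q y) * (dKi p (Suc m) * L' p y)" by simp
    have "L' p y * (f p * ?X + ?Y) - (f p * ?X + ?Y) * L' p y = (ki p * ?X) * GG sc q (L' p) y"
      by (rule G(2)) (use y in auto)
    then show "L' p y * dF p (Suc m) - dF p (Suc m) * L' p y = dKi p (Suc m) * GG sc q (L' p) y"
      by simp
  next
    fix y j assume y: "y \<in> IL" and j: "1 \<le> j \<and> j \<le> n \<and> (j < p \<or> p + Suc m \<le> j)"
    have "cw j (\<Sum>x\<in>IL. cf y x * L (Suc p) x)"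
    proof (rule cw_sum, rule cw_mult)
      fix x assume x: "x \<in> IL"
      show "cw j (cf y x)" using cwcf j by auto
      show "cw j (L (Suc p) x)" using Zl[OF x] j by auto
    qed
    then show "cw j (L' p y)" using N[OF y] by simp
  qed
qed

lemma tau_lift:
  assumes inv: "Inv L (Suc p) m" and Lp: "L p = L0 p" and p1: "1 \<le> p" and pm: "p + m \<le> n"
  shows "Inv (Ttau q sc p L) p (Suc m)"
proof -
  interpret P: palg sc q "e p" "f p" "k p" "ki p" using palgI p1 pm by auto
  show ?thesis
  proof (rule gen_lift[OF inv p1 pm _ _ P.condT_b P.condT_a])
    show "\<And>j y x. 1 \<le> j \<Longrightarrow> j \<le> n \<Longrightarrow> j \<noteq> p \<Longrightarrow> cw j (cfT sc q (e p) (f p) (k p) (ki p) y x)"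
      using cw_cfT p1 pm by auto
    show "\<And>y. y \<in> IL \<Longrightarrow> Ttau q sc p L p y = (\<Sum>x\<in>IL. cfT sc q (e p) (f p) (k p) (ki p) y x * L (Suc p) x)"
      by (simp add: Ttau_def tau_dec[where L=L and p=p, OF Lp])
  qed
qed

lemma del_lift:
  assumes inv: "Inv L (Suc p) m" and Lp: "L p = L0 p" and p1: "1 \<le> p" and pm: "p + m \<le> n"
  shows "Inv (Tdel q sc p L) p (Suc m)"
proof -
  interpret P: palg sc q "e p" "f p" "k p" "ki p" using palgI p1 pm by auto
  show ?thesis
  proof (rule gen_lift[OF inv p1 pm _ _ P.condD_b P.condD_a])
    show "\<And>j y x. 1 \<le> j \<Longrightarrow> j \<le> n \<Longrightarrow> j \<noteq> p \<Longrightarrow> cw j (cfD sc q (e p) (f p) (k p) (ki p) y x)"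
      using cw_cfD p1 pm by auto
    show "\<And>y. y \<in> IL \<Longrightarrow> Tdel q sc p L p y = (\<Sum>x\<in>IL. cfD sc q (e p) (f p) (k p) (ki p) y x * L (Suc p) x)"
      by (simp add: Tdel_def del_dec[where L=L and p=p, OF Lp])
  qed
qed

lemma Inv_W: "1 \<le> p \<Longrightarrow> p + 2 * m \<le> n \<Longrightarrow> Inv (Wint q sc L0 p m) p (Suc (2 * m))"
proof (induct m arbitrary: p)
  case 0 then show ?case using Inv_base by simp
next
  case (Suc m)
  let ?W = "Wint q sc L0 (Suc (Suc p)) m"
  have I1: "Inv ?W (Suc (Suc p)) (Suc (2 * m))" using Suc by auto
  have I2: "Inv (Ttau q sc (Suc p) ?W) (Suc p) (Suc (Suc (2 * m)))"
    by (rule tau_lift[OF I1]) (use Suc.prems in \<open>simp_all add: Wint_low\<close>)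
  have I3: "Inv (Tdel q sc p (Ttau q sc (Suc p) ?W)) p (Suc (Suc (Suc (2 * m))))"
    by (rule del_lift[OF I2]) (use Suc.prems in \<open>simp_all add: Wint_low Ttau_other\<close>)
  then show ?case by simp
qed

lemma lc_aux: assumes "a * b = b * a" shows "a * (b * z) = b * (a * (z::'a))"
proof -
  have "a * (b * z) = (a * b) * z" by (simp add: mult.assoc)
  also have "\<dots> = (b * a) * z" using assms by simp
  also have "\<dots> = b * (a * z)" by (simp add: mult.assoc)
  finally show ?thesis .
qed

lemma gen_cmm_d: assumes "1 \<le> P" "P + m \<le> n" "g \<in> {e P, f P, k P, ki P}"
  shows "cmm g (dKi (Suc P) m) \<and> cmm g (dF (Suc P) m) \<and> cmm g (dK (Suc P) m)"
proof (rule d_cmm)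
  fix j assume j: "Suc P \<le> j" "j < Suc P + m"
  then show "cw j g" using assms cw_gen[of P j] by auto
qed

lemma dKi_dK: "1 \<le> P \<Longrightarrow> P + m \<le> Suc n \<Longrightarrow> dKi P m * dK P m = 1 \<and> dK P m * dKi P m = 1"
proof (induct m arbitrary: P)
  case 0 then show ?case by simp
next
  case (Suc m)
  interpret PP: palg sc q "e P" "f P" "k P" "ki P" using palgI Suc.prems by auto
  have IH: "dKi (Suc P) m * dK (Suc P) m = 1 \<and> dK (Suc P) m * dKi (Suc P) m = 1" using Suc by auto
  have c1: "cmm (k P) (dKi (Suc P) m)" and c2: "cmm (ki P) (dK (Suc P) m)"
    using gen_cmm_d[of P m "k P"] gen_cmm_d[of P m "ki P"] Suc.prems by auto
  have "dKi P (Suc m) * dK P (Suc m) = ki P * (dKi (Suc P) m * k P) * dK (Suc P) m" by (simp add: mult.assoc)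
  also have "\<dots> = (ki P * k P) * (dKi (Suc P) m * dK (Suc P) m)"
  proof -
    have "dKi (Suc P) m * k P = k P * dKi (Suc P) m" using c1 by (simp add: cmm_def)
    then show ?thesis by (simp add: mult.assoc)
  qed
  also have "\<dots> = 1" using IH PP.KiK by simp
  finally have A: "dKi P (Suc m) * dK P (Suc m) = 1" .
  have "dK P (Suc m) * dKi P (Suc m) = k P * (dK (Suc P) m * ki P) * dKi (Suc P) m" by (simp add: mult.assoc)
  also have "\<dots> = (k P * ki P) * (dK (Suc P) m * dKi (Suc P) m)"
  proof -
    have "dK (Suc P) m * ki P = ki P * dK (Suc P) m" using c2 by (simp add: cmm_def)
    then show ?thesis by (simp add: mult.assoc)
  qed
  also have "\<dots> = 1" using IH PP.KKi by simp
  finally show ?case using A by simp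
qed

lemma dKi_dF: "1 \<le> P \<Longrightarrow> P + m \<le> Suc n \<Longrightarrow> dKi P m * dF P m = sc (q^2) * (dF P m * dKi P m)"
proof (induct m arbitrary: P)
  case 0 then show ?case by (simp add: sc0)
next
  case (Suc m)
  interpret PP: palg sc q "e P" "f P" "k P" "ki P" using palgI Suc.prems by auto
  let ?X = "dKi (Suc P) m" let ?Y = "dF (Suc P) m"
  have IH: "?X * ?Y = sc (q^2) * (?Y * ?X)" using Suc by auto
  have c1: "?X * f P = f P * ?X" and c2: "?Y * ki P = ki P * ?Y" and c3: "?X * ki P = ki P * ?X"
    using gen_cmm_d[of P m "f P"] gen_cmm_d[of P m "ki P"] Suc.prems unfolding cmm_def by auto
  have "dKi P (Suc m) * dF P (Suc m) = ki P * (?X * f P) * ?X + ki P * (?X * ?Y)"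
    by (simp add: distrib_left mult.assoc)
  also have "\<dots> = (ki P * f P) * (?X * ?X) + ki P * (sc (q^2) * (?Y * ?X))"
    by (simp add: c1 IH mult.assoc)
  also have "\<dots> = sc (q^2) * ((f P * ki P) * (?X * ?X) + ki P * (?Y * ?X))"
    by (simp add: PP.KiF sc_mid distrib_left mult.assoc)
  also have "\<dots> = sc (q^2) * (dF P (Suc m) * dKi P (Suc m))"
    by (simp add: distrib_right mult.assoc c2 c3 lc_aux[OF c2] lc_aux[OF c3])
  finally show ?case .
qed

lemma Vform:
  assumes "1 \<le> p" "p + m \<le> n"
  shows "Ftau q sc p m L0 p LKi = ki (p+m) - sc (inverse q * (q - inverse q)^2) * (dF p m * (e (p+m) * ki (p+m)))
       \<and> Ftau q sc p m L0 p LEKi = dKi p m * (e (p+m) * ki (p+m))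
       \<and> Ftau q sc p m L0 p LF = dK p m * f (p+m)
            - sc (inverse q ^ 3 * (q - inverse q)^2) * (dF p m * dF p m * dK p m * (e (p+m) * ki (p+m)))
            + sc (inverse q * (q + inverse q)) * (dF p m * dK p m * ki (p+m))
            - sc (inverse q) * (dF p m * dK p m * L0 (p+m) LLam)
       \<and> Ftau q sc p m L0 p LLam = L0 (p+m) LLam"
  using assms
proof (induct m arbitrary: p)
  case 0 then show ?case by (simp add: sc0)
next
  case (Suc m)
  interpret PP: palg sc q "e p" "f p" "k p" "ki p" using palgI Suc.prems by auto
  let ?X = "dKi (Suc p) m" let ?Y = "dF (Suc p) m" let ?K = "dK (Suc p) m"
  let ?V = "Ftau q sc (Suc p) m L0 (Suc p)"
  let ?N = "p + Suc m"
  have IH0: "?V LKi = ki ?N - sc (inverse q * (q - inverse q)^2) * (?Y * (e ?N * ki ?N))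
       \<and> ?V LEKi = ?X * (e ?N * ki ?N)
       \<and> ?V LF = ?K * f ?N
            - sc (inverse q ^ 3 * (q - inverse q)^2) * (?Y * ?Y * ?K * (e ?N * ki ?N))
            + sc (inverse q * (q + inverse q)) * (?Y * ?K * ki ?N)
            - sc (inverse q) * (?Y * ?K * L0 ?N LLam)
       \<and> ?V LLam = L0 ?N LLam"
    using Suc.hyps[of "Suc p"] Suc.prems by simp
  note IH = IH0[THEN conjunct1] IH0[THEN conjunct2, THEN conjunct1]
     IH0[THEN conjunct2, THEN conjunct2, THEN conjunct1] IH0[THEN conjunct2, THEN conjunct2, THEN conjunct2]
  have dec: "Ftau q sc p (Suc m) L0 p y = (\<Sum>x\<in>IL. cfT sc q (e p) (f p) (k p) (ki p) y x * ?V x)"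
    if "y \<in> IL" for y
  proof -
    have "Ftau q sc (Suc p) m L0 p = L0 p" by (simp add: Ftau_low)
    from tau_dec[where L="Ftau q sc (Suc p) m L0" and p=p, OF this that]
    show ?thesis by (simp add: Ttau_def)
  qed
  have cm: "cmm g ?X \<and> cmm g ?Y \<and> cmm g ?K" if "g \<in> {e p, f p, k p, ki p}" for g
    using gen_cmm_d[of p m g] Suc.prems that by auto
  have r1: "?X * f p = f p * ?X" "?Y * f p = f p * ?Y" "?K * f p = f p * ?K"
     "?X * k p = k p * ?X" "?Y * k p = k p * ?Y" "?K * k p = k p * ?K"
    using cm[of "f p"] cm[of "k p"] by (simp_all add: cmm_def)
  have XK: "?X * ?K = 1" using dKi_dK[of "Suc p" m] Suc.prems by simp
  have XK2: "?X * (?K * z) = z" for z by (simp add: mult.assoc[symmetric] XK)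
  have XY: "?X * ?Y = sc (q^2) * (?Y * ?X)" using dKi_dF[of "Suc p" m] Suc.prems by simp
  have XY2: "?X * (?Y * z) = sc (q^2) * (?Y * (?X * z))" for z
    by (simp add: mult.assoc[symmetric] XY)
  have kf2: "k p * (f p * z) = sc (inverse q ^ 2) * (f p * (k p * z))" for z
    by (simp add: PP.nrm1)
  note vr = r1 lc_aux[OF r1(1)] lc_aux[OF r1(2)] lc_aux[OF r1(3)] lc_aux[OF r1(4)] lc_aux[OF r1(5)] lc_aux[OF r1(6)]
    XK XK2 XY XY2 PP.KF' kf2
    sc_mid[of "f p"] sc_mid[of "k p"] sc_mid[of "ki p"] sc_mid[of ?X] sc_mid[of ?Y] sc_mid[of ?K]
    sc_ml sc_mm grp sc_add1 sc_add2 sc_add3 sc_add4 sc_add5 sc_add6 sc_add7 sc_add8 sc_diff sc_neg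
    add.assoc mult.assoc distrib_left distrib_right
  have IL4: "LKi \<in> IL" "LEKi \<in> IL" "LF \<in> IL" "LLam \<in> IL" by (simp_all add: IL_def)
  have A: "Ftau q sc p (Suc m) L0 p LKi = ki ?N - sc (inverse q * (q - inverse q)^2) * (dF p (Suc m) * (e ?N * ki ?N))"
    apply (simp only: dec[OF IL4(1)])
    apply (rule to_zero)
    apply (simp add: IL_def cfT_def IH vr sc0 sc1)
    apply ((intro zsum; (simp only: qfold)?; insert qfacts; ((simp add: algebra_simps power2_eq_square; fail) | algebra)))?
    done
  have B: "Ftau q sc p (Suc m) L0 p LEKi = dKi p (Suc m) * (e ?N * ki ?N)"
    by (simp only: dec[OF IL4(2)]) (simp add: IL_def cfT_def IH mult.assoc)
  let ?lE = "e ?N * ki ?N" let ?lL = "L0 ?N LLam"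
  let ?b = "inverse q ^ 3 * (q - inverse q)^2" let ?d = "inverse q * (q + inverse q)"
  let ?a = "inverse q * (q - inverse q)^2"
  have PE: "k p * (- (sc ?b * (?Y * ?Y * ?K * ?lE)))
      + sc (- (inverse q ^ 3) * (q - inverse q)^2) * (f p * (f p * k p)) * (?X * ?lE)
      + sc ?d * (f p * k p) * (- (sc ?a * (?Y * ?lE)))
      = - (sc ?b * ((f p * ?X + ?Y) * (f p * ?X + ?Y) * (k p * ?K) * ?lE))"
    apply (rule to_zero)
    apply (simp add: vr sc0 sc1 del: letter_val.simps)
    apply ((intro zsum; (simp only: qfold)?; insert qfacts; ((simp add: algebra_simps power2_eq_square; fail) | algebra)))?
    done
  have PK: "sc ?d * (f p * k p) * ki ?N + k p * (sc ?d * (?Y * ?K * ki ?N))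
      = sc ?d * ((f p * ?X + ?Y) * (k p * ?K) * ki ?N)"
    apply (rule to_zero)
    apply (simp add: vr sc0 sc1 del: letter_val.simps)
    apply ((intro zsum; (simp only: qfold)?; insert qfacts; ((simp add: algebra_simps power2_eq_square; fail) | algebra)))?
    done
  have PL: "sc (- inverse q) * (f p * k p) * ?lL + k p * (- (sc (inverse q) * (?Y * ?K * ?lL)))
      = - (sc (inverse q) * ((f p * ?X + ?Y) * (k p * ?K) * ?lL))"
    apply (rule to_zero)
    apply (simp add: vr sc0 sc1 del: letter_val.simps)
    apply ((intro zsum; (simp only: qfold)?; insert qfacts; ((simp add: algebra_simps power2_eq_square; fail) | algebra)))?
    done
  have C0: "Ftau q sc p (Suc m) L0 p LF = k p * (?K * f ?N)
      + (k p * (- (sc ?b * (?Y * ?Y * ?K * ?lE)))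
        + sc (- (inverse q ^ 3) * (q - inverse q)^2) * (f p * (f p * k p)) * (?X * ?lE)
        + sc ?d * (f p * k p) * (- (sc ?a * (?Y * ?lE))))
      + (sc ?d * (f p * k p) * ki ?N + k p * (sc ?d * (?Y * ?K * ki ?N)))
      + (sc (- inverse q) * (f p * k p) * ?lL + k p * (- (sc (inverse q) * (?Y * ?K * ?lL))))"
    by (simp only: dec[OF IL4(3)]) (simp add: IL_def cfT_def IH algebra_simps del: letter_val.simps)
  have C: "Ftau q sc p (Suc m) L0 p LF = dK p (Suc m) * f ?N
            - sc (inverse q ^ 3 * (q - inverse q)^2) * (dF p (Suc m) * dF p (Suc m) * dK p (Suc m) * (e ?N * ki ?N))
            + sc (inverse q * (q + inverse q)) * (dF p (Suc m) * dK p (Suc m) * ki ?N)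
            - sc (inverse q) * (dF p (Suc m) * dK p (Suc m) * L0 ?N LLam)"
    unfolding C0 PE PK PL by (simp add: algebra_simps del: letter_val.simps)
  have D: "Ftau q sc p (Suc m) L0 p LLam = L0 ?N LLam"
    by (simp only: dec[OF IL4(4)]) (simp add: IL_def cfT_def IH)
  show ?case using A B C D by simp
qed

lemma inv_comm: fixes a b c :: 'a assumes "a * b = b * a" "b * c = 1" "c * b = 1" shows "a * c = c * a"
proof -
  have "a * c = (c * b) * a * c" using assms(3) by simp
  also have "\<dots> = c * (a * b) * c" using assms(1) by (simp add: mult.assoc)
  also have "\<dots> = c * a" using assms(2) by (simp add: mult.assoc)
  finally show ?thesis .
qed

lemma list_evens: "map (\<lambda>j. p + 2*j) [Suc 0..<Suc (Suc m)] = Suc (Suc p) # map (\<lambda>j. Suc (Suc p) + 2*j) [Suc 0..<Suc m]"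
proof -
  have u: "[Suc 0..<Suc (Suc m)] = Suc 0 # map Suc [Suc 0..<Suc m]" by (simp del: upt_Suc add: upt_conv_Cons map_Suc_upt)
  show ?thesis by (simp del: upt_Suc add: u)
qed

lemma main:
  assumes n: "2 * Suc k' + 1 \<le> n"
  shows "evL sc L0 (LamA q ((\<lambda>i. 2 * i) ` {1..Suc k'})) * evL sc L0 (LamA q {1, 2 * Suc k' + 1})
       = evL sc L0 (LamA q {1, 2 * Suc k' + 1}) * evL sc L0 (LamA q ((\<lambda>i. 2 * i) ` {1..Suc k'}))"
proof -
  let ?xs = "map (\<lambda>i. 0 + 2 * i) [Suc 0..<Suc (Suc k')]"
  have S1: "(\<lambda>i. 2 * i) ` {1..Suc k'} = set ?xs" by (simp add: atLeastLessThanSuc_atLeastAtMost del: upt_Suc)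
  have dxs: "distinct ?xs" by (simp add: distinct_map inj_on_def del: upt_Suc)
  have sxs: "sorted ?xs" unfolding sorted_map by (rule sorted_wrt_mono_rel[OF _ sorted_upt]) simp
  have S2: "sorted_list_of_set ((\<lambda>i. 2 * i) ` {1..Suc k'}) = ?xs"
    unfolding S1 sorted_list_of_set_sort_remdups using dxs sxs by (simp add: distinct_remdups_id sorted_sort_id)
  have LC: "LamA q ((\<lambda>i. 2 * i) ` {1..Suc k'}) = lam_steps q 2 (map (\<lambda>j. 2 + 2*j) [Suc 0..<Suc k']) (At 2 LLam)"
    unfolding LamA_def S2 list_evens by (simp add: numeral_2_eq_2)
  let ?C = "Wint q sc L0 2 k' 2 LLam"
  have Ceq: "evL sc L0 (LamA q ((\<lambda>i. 2 * i) ` {1..Suc k'})) = ?C"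
  proof -
    have "evL sc L0 (lam_steps q 2 (map (\<lambda>j. 2 + 2*j) [1..<Suc k']) (At 2 LLam)) = evL sc (Wint q sc L0 2 k') (At 2 LLam)"
      by (rule evL_lam)
    then show ?thesis unfolding LC by simp
  qed
  have S3: "sorted_list_of_set {1, 2 * Suc k' + 1} = [1, 2 * Suc k' + 1]"
  proof -
    have "{1, 2 * Suc k' + 1} = set [1, 2 * Suc k' + 1]" by simp
    then show ?thesis by (simp only: sorted_list_of_set_sort_remdups) simp
  qed
  let ?m = "Suc (2 * k')"
  let ?F = "Ftau q sc 2 ?m L0"
  have LD: "LamA q {1, 2 * Suc k' + 1} = fold (tauR_at q) [2..<2 + ?m] (delta_at q 1 (At 1 LLam))"
  proof -
    have e1: "2 * Suc k' + 1 = 2 + ?m" by simp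
    show ?thesis unfolding LamA_def S3 e1 by (simp add: mu_step_def numeral_2_eq_2 del: upt_Suc)
  qed
  let ?D = "\<Sum>x\<in>IL. cfD sc q (e 1) (f 1) (k 1) (ki 1) LLam x * ?F 2 x"
  have Deq: "evL sc L0 (LamA q {1, 2 * Suc k' + 1}) = ?D"
  proof -
    have "evL sc L0 (LamA q {1, 2 * Suc k' + 1}) = evL sc ?F (delta_at q 1 (At 1 LLam))"
      unfolding LD by (rule evL_fold)
    also have "\<dots> = evL sc ?F (delta_img q 1 LLam)" by (simp add: evL_del Tdel_def)
    also have "\<dots> = ?D"
    proof -
      have h1: "?F 1 = L0 1" by (rule Ftau_low) simp
      have d: "evL sc ?F (delta_img q 1 LLam) = (\<Sum>x\<in>IL. cfD sc q (e 1) (f 1) (k 1) (ki 1) LLam x * ?F (Suc 1) x)"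
        by (rule del_dec[where L="?F" and p=1, OF h1]) (simp add: IL_def)
      then show ?thesis by (simp only: Suc_1)
    qed
    finally show ?thesis .
  qed
  have inv: "Inv (Wint q sc L0 2 k') 2 (Suc (2 * k'))" by (rule Inv_W) (use n in simp_all)
  have LamIL: "LLam \<in> IL" by (simp add: IL_def)
  have Ca: "cmm ?C (dKi 2 ?m)" using inv LamIL unfolding Inv_def cmm_def by (simp add: wq_def sc1)
  have Cb: "cmm ?C (dF 2 ?m)"
  proof -
    have "?C * dF 2 ?m - dF 2 ?m * ?C = dKi 2 ?m * GG sc q (Wint q sc L0 2 k' 2) LLam"
      using inv LamIL unfolding Inv_def by blast
    also have "GG sc q (Wint q sc L0 2 k' 2) LLam = 0" by (simp add: GG_def gc_def sc0)
    finally show ?thesis unfolding cmm_def by simp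
  qed
  have Cloc: "cw j ?C" if "j = 1 \<or> j = 2 * k' + 3" for j
    using inv LamIL that n unfolding Inv_def by auto
  have KK: "dKi 2 ?m * dK 2 ?m = 1 \<and> dK 2 ?m * dKi 2 ?m = 1" by (rule dKi_dK) (use n in simp_all)
  have Cc: "cmm ?C (dK 2 ?m)"
    using inv_comm[of ?C "dKi 2 ?m" "dK 2 ?m"] Ca KK unfolding cmm_def by blast
  have N: "2 + ?m = 2 * k' + 3" by simp
  have V: "?F 2 LKi = ki (2 * k' + 3) - sc (inverse q * (q - inverse q)^2) * (dF 2 ?m * (e (2 * k' + 3) * ki (2 * k' + 3)))
       \<and> ?F 2 LEKi = dKi 2 ?m * (e (2 * k' + 3) * ki (2 * k' + 3))
       \<and> ?F 2 LF = dK 2 ?m * f (2 * k' + 3)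
            - sc (inverse q ^ 3 * (q - inverse q)^2) * (dF 2 ?m * dF 2 ?m * dK 2 ?m * (e (2 * k' + 3) * ki (2 * k' + 3)))
            + sc (inverse q * (q + inverse q)) * (dF 2 ?m * dK 2 ?m * ki (2 * k' + 3))
            - sc (inverse q) * (dF 2 ?m * dK 2 ?m * L0 (2 * k' + 3) LLam)
       \<and> ?F 2 LLam = L0 (2 * k' + 3) LLam"
    by (rule Vform[of 2 "Suc (2 * k')", unfolded N]) (use n in simp_all)
  have CN: "cw (2 * k' + 3) ?C" using Cloc by simp
  have CNg: "cmm ?C (e (2 * k' + 3)) \<and> cmm ?C (f (2 * k' + 3)) \<and> cmm ?C (k (2 * k' + 3)) \<and> cmm ?C (ki (2 * k' + 3))"
    using cw_cmm[OF CN] .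
  have CNL: "cmm ?C (L0 (2 * k' + 3) LLam)" using cmm_L0[OF CN] .
  have CV: "cmm ?C (?F 2 x)" if "x \<in> IL" for x
    using that V Ca Cb Cc CNg CNL unfolding IL_def by (auto simp: cmm_cl simp del: letter_val.simps)
  have C1: "cw 1 ?C" using Cloc by simp
  have CD: "cmm ?C ?D"
    by (rule cmm_sum, rule cmm_mult, rule cmm_cfD[OF C1], rule CV)
  show ?thesis unfolding Ceq Deq using CD unfolding cmm_def .
qed
end

theorem lemma4p5:
  fixes q :: "'k::field" and sc :: "'k \<Rightarrow> 'a::ring_1"
    and e f k ki :: "nat \<Rightarrow> 'a" and kk n :: nat
  assumes "not_root_of_unity q"
    and "kk \<ge> 1" and "n \<ge> 2 * kk + 1"
    and "Uq_tensor_model q n sc e f k ki"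
  shows "ev q sc e f k ki (LamA q ((\<lambda>i. 2 * i) ` {1..kk})) * ev q sc e f k ki (LamA q {1, 2 * kk + 1})
       = ev q sc e f k ki (LamA q {1, 2 * kk + 1}) * ev q sc e f k ki (LamA q ((\<lambda>i. 2 * i) ` {1..kk}))"
proof -
  obtain k' where kk: "kk = Suc k'" using assms(2) by (cases kk) auto
  note M = assms(4)[unfolded Uq_tensor_model_def]
  have M1: "sc 1 = 1" using M by (rule conjunct1)
  have M2: "\<And>x y. sc (x + y) = sc x + sc y" using M[THEN conjunct2, THEN conjunct1] by (rule spec2)
  have M3: "\<And>x y. sc (x * y) = sc x * sc y" using M[THEN conjunct2, THEN conjunct2, THEN conjunct1] by (rule spec2)
  have M4: "\<And>x a. sc x * a = a * sc x" using M[THEN conjunct2, THEN conjunct2, THEN conjunct2, THEN conjunct1] by (rule spec2)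
  have q0: "q \<noteq> 0" using assms(1) unfolding not_root_of_unity_def by (rule conjunct1)
  have q2: "q ^ 2 \<noteq> 1" using assms(1) unfolding not_root_of_unity_def by simp
  have qq: "q - inverse q \<noteq> 0"
  proof
    assume "q - inverse q = 0"
    then have "q * q = q * inverse q" by simp
    then have "q ^ 2 = 1" using q0 by (simp add: power2_eq_square)
    then show False using q2 by simp
  qed
  have S: "scl sc q" by (rule scl.intro, rule M1, rule M2, rule M3, rule M4, rule q0, rule qq)
  interpret U: uq sc q e f k ki n by (rule uq.intro[OF S uq_axioms.intro, OF assms(4)])
  show ?thesis unfolding kk ev_evL
    by (rule U.main) (use assms(3) kk in simp)
qed

end
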